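(* Consider the safety strategy-improvement algorithm described in the context, run on a concurrent game structure $G$ with safe set $F$, and let $v_i=\mathrm{val}_1^{\overline{\gamma}_i}(\mathrm{Safe}(F))$ be the valuation at iteration $i$. If $I=\{s\in S\setminus(W_1\cup T):\mathrm{Pre}_1(v_i)(s)>v_i(s)\}=\emptyset$ and $(\overline{A}_i\cap S)\setminus W_1=\emptyset$, then $\overline{\gamma}_i$ is an optimal strategy and $v_i=\mathrm{val}_1(\mathrm{Safe}(F))$.
   Context: Concurrent game structure $G=(S,M,\Gamma_1,\Gamma_2,\delta)$: finite states $S$, finite moves $M$, nonempty move sets $\Gamma_i(s)\subseteq M$, $\delta(s,a_1,a_2)\in\mathrm{Distr}(S)$ (simultaneous independent moves); $\mathrm{Dest}(s,a_1,a_2)=\mathrm{supp}\,\delta(s,a_1,a_2)$. A state is absorbing if every move pair leads back to it with probability 1. A selector for player $i$ assigns to each state $s$ a distribution on $\Gamma_i(s)$ (a selector at $s$ is such a distribution); $\overline{\xi}$ is the memoryless strategy playing $\xi$ forever. $\mathrm{Safe}(F)$ is the set of plays that stay in $F$ forever; $\mathrm{val}_1^{\pi_1}(\mathrm{Safe}(F))(s)=\inf_{\pi_2}\Pr_s^{\pi_1,\pi_2}(\mathrm{Safe}(F))$, $\mathrm{val}_1(\mathrm{Safe}(F))=\sup_{\pi_1}\mathrm{val}_1^{\pi_1}(\mathrm{Safe}(F))$ (over all strategies); $\pi_1$ is optimal if $\mathrm{val}_1^{\pi_1}=\mathrm{val}_1$. For a valuation $v:S\to[0,1]$ and selectors: $\mathrm{Pre}_{\xi_1,\xi_2}(v)(s)=\sum_{a,b}\sum_t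 v(t)\delta(s,a,b)(t)\xi_1(s)(a)\xi_2(s)(b)$; $\mathrm{Pre}_{\xi_1,b}$ uses the point mass on move $b$ for player 2; $\mathrm{Pre}_{1:\xi_1}(v)(s)=\inf_{\xi_2}\mathrm{Pre}_{\xi_1,\xi_2}(v)(s)$; $\mathrm{Pre}_1(v)(s)=\sup_{\xi_1}\mathrm{Pre}_{1:\xi_1}(v)(s)$. Let $T=S\setminus F$ and $W_1=\{s:\mathrm{val}_1(\mathrm{Safe}(F))(s)=1\}$; standing assumption: all states of $W_1\cup T$ are absorbing. $\mathrm{OptSel}(v,s)=\{\xi_1\text{ selector at }s:\mathrm{Pre}_{1:\xi_1}(v)(s)=\mathrm{Pre}_1(v)(s)\}$; for $\xi_1\in\mathrm{OptSel}(v,s)$, $\mathrm{CountOpt}(v,s,\xi_1)=\{b\in\Gamma_2(s):\mathrm{Pre}_{\xi_1,b}(v)(s)=\mathrm{Pre}_1(v)(s)\}$; $\mathrm{OptSelCount}(v,s)$ is the set of pairs $(A,B)$ with $A\subseteq\Gamma_1(s)$, $B\subseteq\Gamma_2(s)$ such that some $\xi_1\in\mathrm{OptSel}(v,s)$ has support $A$ and $\mathrm{CountOpt}(v,s,\xi_1)=B$. Turn-based reduction $\mathrm{TB}(G,v,F)=(\overline{G}_v,\overline{F})$: a turn-based stochastic game with player-1 states $S$, player-2 states $(s,A,B)$ for $(A,B)\in\mathrm{OptSelCount}(v,s)$, random states $(s,A,b)$ for such $(A,B)$ and $b\in B$; edges $s\to(s,A,B)$, $(s,A,B)\to(s,A,b)$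 for $b\in B$, and $(s,A,b)\to t$ for $t\in\bigcup_{a\in A}\mathrm{Dest}(s,a,b)$; player $i$ picks the successor at its states, random states choose uniformly among successors. $\overline{F}=F\cup\{(s,A,B):s\in F\}\cup\{(s,A,b):s\in F\}$. The almost-sure winning states for $\mathrm{Safe}(\overline{F})$ are those from which player 1 can ensure $\mathrm{Safe}(\overline{F})$ with probability 1 against all player-2 strategies. Algorithm: $\gamma_0=\xi^{\mathrm{unif}}$ (uniform over $\Gamma_1(s)$ at every $s$); $v_i=\mathrm{val}_1^{\overline{\gamma}_i}(\mathrm{Safe}(F))$. At iteration $i$: let $I=\{s\in S\setminus(W_1\cup T):\mathrm{Pre}_1(v_i)(s)>v_i(s)\}$. If $I\ne\emptyset$: take a selector $\xi_1$ with $\mathrm{Pre}_{1:\xi_1}(v_i)(s)=\mathrm{Pre}_1(v_i)(s)$ for $s\in I$ and let $\gamma_{i+1}=\xi_1$ on $I$, $=\gamma_i$ elsewhere. Otherwise: compute $(\overline{G}_{v_i},\overline{F})=\mathrm{TB}(G,v_i,F)$, the set $\overline{A}_i$ of almost-sure winning states for $\mathrm{Safe}(\overline{F})$ in $\overline{G}_{v_i}$, and a pure memoryless almost-sure winning strategy $\overline{\pi}_1$ from $\overline{A}_i$; let $U=(\overline{A}_i\cap S)\setminus W_1$; if $U\ne\emptyset$, let $\gamma_{i+1}=\gamma_i$ outside $U$ and, for $s\in U$ with $\overline{\pi}_1(s)=(s,A,B)$, let $\gamma_{i+1}(s)$ be a selector $\xi\in\mathrm{OptSel}(v_i,s)$ with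 support $A$ and $\mathrm{CountOpt}(v_i,s,\xi)=B$. The algorithm stops when $I=\emptyset$ and $U=\emptyset$. *)

theory Defs
  imports "HOL-Probability.Probability"
begin

record ('s, 'm) cgs =
  mv1 :: "'s \<Rightarrow> 'm set"
  mv2 :: "'s \<Rightarrow> 'm set"
  trans :: "'s \<Rightarrow> 'm \<Rightarrow> 'm \<Rightarrow> 's pmf"

definition Dest :: "('s, 'm) cgs \<Rightarrow> 's \<Rightarrow> 'm \<Rightarrow> 'm \<Rightarrow> 's set" where
  "Dest G s a b = set_pmf (trans G s a b)"

definition absorbing :: "('s, 'm) cgs \<Rightarrow> 's \<Rightarrow> bool" where
  "absorbing G s \<longleftrightarrow> (\<forall>a\<in>mv1 G s. \<forall>b\<in>mv2 G s. trans G s a b = return_pmf s)"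

text \<open>Given a next-state kernel on histories (finite nonempty lists of states),
  the probability that the first n+1 states of the play all satisfy P.\<close>
primrec safe_prob_n :: "('q \<Rightarrow> bool) \<Rightarrow> ('q list \<Rightarrow> 'q pmf) \<Rightarrow> nat \<Rightarrow> 'q list \<Rightarrow> real" where
  "safe_prob_n P K 0 h = (if P (last h) then 1 else 0)"
| "safe_prob_n P K (Suc n) h =
     (if P (last h) then measure_pmf.expectation (K h) (\<lambda>t. safe_prob_n P K n (h @ [t])) else 0)"

text \<open>Probability of the event Safe (stay in P forever) from initial state q: by continuity of
  the play measure, the limit (infimum) of the decreasing finite-horizon cylinder probabilities.\<close>
definition prob_safe :: "('q \<Rightarrow> bool) \<Rightarrow> ('q list \<Rightarrow> 'q pmf) \<Rightarrow> 'q \<Rightarrow> real" where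
  "prob_safe P K q = (INF n. safe_prob_n P K n [q])"

definition strat :: "('s \<Rightarrow> 'm set) \<Rightarrow> ('s list \<Rightarrow> 'm pmf) \<Rightarrow> bool" where
  "strat Gam \<pi> \<longleftrightarrow> (\<forall>h. h \<noteq> [] \<longrightarrow> set_pmf (\<pi> h) \<subseteq> Gam (last h))"

definition cgs_kernel :: "('s, 'm) cgs \<Rightarrow> ('s list \<Rightarrow> 'm pmf) \<Rightarrow> ('s list \<Rightarrow> 'm pmf) \<Rightarrow> 's list \<Rightarrow> 's pmf" where
  "cgs_kernel G \<pi>1 \<pi>2 h =
     bind_pmf (\<pi>1 h) (\<lambda>a. bind_pmf (\<pi>2 h) (\<lambda>b. trans G (last h) a b))"

definition val1_strat :: "('s, 'm) cgs \<Rightarrow> 's set \<Rightarrow> ('s list \<Rightarrow> 'm pmf) \<Rightarrow> 's \<Rightarrow> real" where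
  "val1_strat G F \<pi>1 s = (INF \<pi>2 \<in> {\<pi>2. strat (mv2 G) \<pi>2}. prob_safe (\<lambda>t. t \<in> F) (cgs_kernel G \<pi>1 \<pi>2) s)"

definition val1 :: "('s, 'm) cgs \<Rightarrow> 's set \<Rightarrow> 's \<Rightarrow> real" where
  "val1 G F s = (SUP \<pi>1 \<in> {\<pi>1. strat (mv1 G) \<pi>1}. val1_strat G F \<pi>1 s)"

definition optimal1 :: "('s, 'm) cgs \<Rightarrow> 's set \<Rightarrow> ('s list \<Rightarrow> 'm pmf) \<Rightarrow> bool" where
  "optimal1 G F \<pi>1 \<longleftrightarrow> strat (mv1 G) \<pi>1 \<and> val1_strat G F \<pi>1 = val1 G F"

definition selector :: "('s \<Rightarrow> 'm set) \<Rightarrow> ('s \<Rightarrow> 'm pmf) \<Rightarrow> bool" where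
  "selector Gam \<xi> \<longleftrightarrow> (\<forall>s. set_pmf (\<xi> s) \<subseteq> Gam s)"

definition sel_at :: "('s \<Rightarrow> 'm set) \<Rightarrow> 's \<Rightarrow> 'm pmf set" where
  "sel_at Gam s = {x. set_pmf x \<subseteq> Gam s}"

definition memoryless :: "('s \<Rightarrow> 'm pmf) \<Rightarrow> 's list \<Rightarrow> 'm pmf" where
  "memoryless \<xi> h = \<xi> (last h)"

definition W1 :: "('s, 'm) cgs \<Rightarrow> 's set \<Rightarrow> 's set" where
  "W1 G F = {s. val1 G F s = 1}"

definition Pre_sel :: "('s::finite, 'm::finite) cgs \<Rightarrow> ('s \<Rightarrow> real) \<Rightarrow> 'm pmf \<Rightarrow> 'm pmf \<Rightarrow> 's \<Rightarrow> real" where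
  "Pre_sel G v x1 x2 s =
     (\<Sum>a\<in>UNIV. \<Sum>b\<in>UNIV. \<Sum>t\<in>UNIV. v t * pmf (trans G s a b) t * pmf x1 a * pmf x2 b)"

definition Pre1_fix :: "('s::finite, 'm::finite) cgs \<Rightarrow> ('s \<Rightarrow> real) \<Rightarrow> 'm pmf \<Rightarrow> 's \<Rightarrow> real" where
  "Pre1_fix G v x1 s = (INF x2 \<in> sel_at (mv2 G) s. Pre_sel G v x1 x2 s)"

definition Pre1 :: "('s::finite, 'm::finite) cgs \<Rightarrow> ('s \<Rightarrow> real) \<Rightarrow> 's \<Rightarrow> real" where
  "Pre1 G v s = (SUP x1 \<in> sel_at (mv1 G) s. Pre1_fix G v x1 s)"

definition OptSel :: "('s::finite, 'm::finite) cgs \<Rightarrow> ('s \<Rightarrow> real) \<Rightarrow> 's \<Rightarrow> 'm pmf set" where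
  "OptSel G v s = {x1 \<in> sel_at (mv1 G) s. Pre1_fix G v x1 s = Pre1 G v s}"

definition CountOpt :: "('s::finite, 'm::finite) cgs \<Rightarrow> ('s \<Rightarrow> real) \<Rightarrow> 's \<Rightarrow> 'm pmf \<Rightarrow> 'm set" where
  "CountOpt G v s x1 = {b \<in> mv2 G s. Pre_sel G v x1 (return_pmf b) s = Pre1 G v s}"

definition OptSelCount :: "('s::finite, 'm::finite) cgs \<Rightarrow> ('s \<Rightarrow> real) \<Rightarrow> 's \<Rightarrow> ('m set \<times> 'm set) set" where
  "OptSelCount G v s =
     {(A, B). A \<subseteq> mv1 G s \<and> B \<subseteq> mv2 G s \<and>
        (\<exists>x1\<in>OptSel G v s. set_pmf x1 = A \<and> CountOpt G v s x1 = B)}"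

datatype ('s, 'm) tbst = TB1 's | TB2 's "'m set" "'m set" | TBR 's "'m set" 'm

fun tb_base :: "('s, 'm) tbst \<Rightarrow> 's" where
  "tb_base (TB1 s) = s"
| "tb_base (TB2 s A B) = s"
| "tb_base (TBR s A b) = s"

definition tb_states :: "('s::finite, 'm::finite) cgs \<Rightarrow> ('s \<Rightarrow> real) \<Rightarrow> ('s, 'm) tbst set" where
  "tb_states G v =
     range TB1
     \<union> {TB2 s A B | s A B. (A, B) \<in> OptSelCount G v s}
     \<union> {TBR s A b | s A B b. (A, B) \<in> OptSelCount G v s \<and> b \<in> B}"

fun tb_succ :: "('s::finite, 'm::finite) cgs \<Rightarrow> ('s \<Rightarrow> real) \<Rightarrow> ('s, 'm) tbst \<Rightarrow> ('s, 'm) tbst set" where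
  "tb_succ G v (TB1 s) = {TB2 s A B | A B. (A, B) \<in> OptSelCount G v s}"
| "tb_succ G v (TB2 s A B) = {TBR s A b | b. b \<in> B}"
| "tb_succ G v (TBR s A b) = TB1 ` (\<Union>a\<in>A. Dest G s a b)"

definition tb_safe :: "'s set \<Rightarrow> ('s, 'm) tbst \<Rightarrow> bool" where
  "tb_safe F q \<longleftrightarrow> tb_base q \<in> F"

definition is_p1 :: "('s, 'm) tbst \<Rightarrow> bool" where
  "is_p1 q \<longleftrightarrow> (\<exists>s. q = TB1 s)"

definition is_p2 :: "('s, 'm) tbst \<Rightarrow> bool" where
  "is_p2 q \<longleftrightarrow> (\<exists>s A B. q = TB2 s A B)"

definition tb_strat1 :: "('s::finite, 'm::finite) cgs \<Rightarrow> ('s \<Rightarrow> real) \<Rightarrow> (('s, 'm) tbst list \<Rightarrow> ('s, 'm) tbst pmf) \<Rightarrow> bool" where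
  "tb_strat1 G v \<pi> \<longleftrightarrow> (\<forall>h. h \<noteq> [] \<longrightarrow> last h \<in> tb_states G v \<longrightarrow> is_p1 (last h)
      \<longrightarrow> set_pmf (\<pi> h) \<subseteq> tb_succ G v (last h))"

definition tb_strat2 :: "('s::finite, 'm::finite) cgs \<Rightarrow> ('s \<Rightarrow> real) \<Rightarrow> (('s, 'm) tbst list \<Rightarrow> ('s, 'm) tbst pmf) \<Rightarrow> bool" where
  "tb_strat2 G v \<pi> \<longleftrightarrow> (\<forall>h. h \<noteq> [] \<longrightarrow> last h \<in> tb_states G v \<longrightarrow> is_p2 (last h)
      \<longrightarrow> set_pmf (\<pi> h) \<subseteq> tb_succ G v (last h))"

definition tb_kernel :: "('s::finite, 'm::finite) cgs \<Rightarrow> ('s \<Rightarrow> real)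
    \<Rightarrow> (('s, 'm) tbst list \<Rightarrow> ('s, 'm) tbst pmf) \<Rightarrow> (('s, 'm) tbst list \<Rightarrow> ('s, 'm) tbst pmf)
    \<Rightarrow> ('s, 'm) tbst list \<Rightarrow> ('s, 'm) tbst pmf" where
  "tb_kernel G v \<pi>1 \<pi>2 h =
     (case last h of
        TB1 _ \<Rightarrow> \<pi>1 h
      | TB2 _ _ _ \<Rightarrow> \<pi>2 h
      | TBR _ _ _ \<Rightarrow> pmf_of_set (tb_succ G v (last h)))"

definition tb_as_win :: "('s::finite, 'm::finite) cgs \<Rightarrow> ('s \<Rightarrow> real) \<Rightarrow> 's set \<Rightarrow> ('s, 'm) tbst set" where
  "tb_as_win G v F =
     {q \<in> tb_states G v. \<exists>\<pi>1. tb_strat1 G v \<pi>1 \<and>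
        (\<forall>\<pi>2. tb_strat2 G v \<pi>2 \<longrightarrow> prob_safe (tb_safe F) (tb_kernel G v \<pi>1 \<pi>2) q = 1)}"

definition unif_sel :: "('s, 'm) cgs \<Rightarrow> 's \<Rightarrow> 'm pmf" where
  "unif_sel G s = pmf_of_set (mv1 G s)"

abbreviation vals :: "('s::finite, 'm::finite) cgs \<Rightarrow> 's set \<Rightarrow> ('s \<Rightarrow> 'm pmf) \<Rightarrow> 's \<Rightarrow> real" where
  "vals G F \<gamma> \<equiv> val1_strat G F (memoryless \<gamma>)"

definition Iset :: "('s::finite, 'm::finite) cgs \<Rightarrow> 's set \<Rightarrow> ('s \<Rightarrow> 'm pmf) \<Rightarrow> 's set" where
  "Iset G F \<gamma> = {s. s \<notin> W1 G F \<union> (- F) \<and> Pre1 G (vals G F \<gamma>) s > vals G F \<gamma> s}"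

text \<open>U = (A-bar_i \<inter> S) minus W1, where S is identified with the player-1 states TB1 s.\<close>
definition Uset :: "('s::finite, 'm::finite) cgs \<Rightarrow> 's set \<Rightarrow> ('s \<Rightarrow> 'm pmf) \<Rightarrow> 's set" where
  "Uset G F \<gamma> = {s. TB1 s \<in> tb_as_win G (vals G F \<gamma>) F} - W1 G F"

text \<open>One iteration of the algorithm (a relation, since the choices of selectors and of the
  pure memoryless almost-sure winning strategy are nondeterministic).\<close>
definition alg_step :: "('s::finite, 'm::finite) cgs \<Rightarrow> 's set \<Rightarrow> ('s \<Rightarrow> 'm pmf) \<Rightarrow> ('s \<Rightarrow> 'm pmf) \<Rightarrow> bool" where
  "alg_step G F \<gamma> \<gamma>' \<longleftrightarrow>
     (let v = vals G F \<gamma>; I = Iset G F \<gamma> in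
      (I \<noteq> {} \<and>
        (\<exists>\<xi>1. selector (mv1 G) \<xi>1 \<and> (\<forall>s\<in>I. Pre1_fix G v (\<xi>1 s) s = Pre1 G v s) \<and>
              \<gamma>' = (\<lambda>s. if s \<in> I then \<xi>1 s else \<gamma> s)))
    \<or> (I = {} \<and> Uset G F \<gamma> \<noteq> {} \<and>
        (\<exists>\<pi>b :: ('s, 'm) tbst \<Rightarrow> ('s, 'm) tbst.
           (\<forall>s. \<pi>b (TB1 s) \<in> tb_succ G v (TB1 s)) \<and>
           (\<forall>q\<in>tb_as_win G v F. \<forall>\<pi>2. tb_strat2 G v \<pi>2 \<longrightarrow>
               prob_safe (tb_safe F) (tb_kernel G v (\<lambda>h. return_pmf (\<pi>b (last h))) \<pi>2) q = 1) \<and>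
           (\<forall>s. s \<notin> Uset G F \<gamma> \<longrightarrow> \<gamma>' s = \<gamma> s) \<and>
           (\<forall>s\<in>Uset G F \<gamma>. \<forall>A B. \<pi>b (TB1 s) = TB2 s A B \<longrightarrow>
               \<gamma>' s \<in> OptSel G v s \<and> set_pmf (\<gamma>' s) = A \<and> CountOpt G v s (\<gamma>' s) = B))))"

inductive alg_iter :: "('s::finite, 'm::finite) cgs \<Rightarrow> 's set \<Rightarrow> nat \<Rightarrow> ('s \<Rightarrow> 'm pmf) \<Rightarrow> bool"
  for G F where
  init: "alg_iter G F 0 (unif_sel G)"
| step: "alg_iter G F i \<gamma> \<Longrightarrow> alg_step G F \<gamma> \<gamma>' \<Longrightarrow> alg_iter G F (Suc i) \<gamma>'"

end

theory Submission
  imports Defs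
begin

lemma exp01:
  assumes "\<And>x. 0 \<le> f x" "\<And>x. f x \<le> (1::real)"
  shows "0 \<le> measure_pmf.expectation p f \<and> measure_pmf.expectation p f \<le> 1"
proof -
  have int: "integrable (measure_pmf p) f"
    by (rule measure_pmf.integrable_const_bound[where B=1]) (use assms in auto)
  have "measure_pmf.expectation p f \<le> measure_pmf.expectation p (\<lambda>_. 1)"
    by (rule integral_mono[OF int]) (use assms in auto)
  then show ?thesis using assms by (auto intro: integral_nonneg_AE)
qed

lemma exp_int:
  assumes "\<And>x. 0 \<le> f x" "\<And>x. f x \<le> (1::real)"
  shows "integrable (measure_pmf p) f"
    by (rule measure_pmf.integrable_const_bound[where B=1]) (use assms in auto)

lemma spn01: "0 \<le> safe_prob_n P K n h \<and> safe_prob_n P K n h \<le> 1"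
proof (induction n arbitrary: h)
  case 0 then show ?case by simp
next
  case (Suc n)
  then show ?case using exp01[of "\<lambda>t. safe_prob_n P K n (h @ [t])" "K h"] by auto
qed

lemma spn_mono: "safe_prob_n P K (Suc n) h \<le> safe_prob_n P K n h"
proof (induction n arbitrary: h)
  case 0 then show ?case using exp01[of "\<lambda>t. safe_prob_n P K 0 (h @ [t])" "K h"] spn01 by auto
next
  case (Suc n)
  have "measure_pmf.expectation (K h) (\<lambda>t. safe_prob_n P K (Suc n) (h @ [t]))
     \<le> measure_pmf.expectation (K h) (\<lambda>t. safe_prob_n P K n (h @ [t]))"
    by (rule integral_mono) (auto intro!: exp_int simp del: safe_prob_n.simps simp: spn01 Suc.IH)
  then show ?case
    unfolding safe_prob_n.simps(2)[of P K "Suc n" h] safe_prob_n.simps(2)[of P K n h] by simp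
qed

lemma spn_decseq: "decseq (\<lambda>n. safe_prob_n P K n h)"
  by (rule decseq_SucI) (rule spn_mono)

lemma ps_le: "prob_safe P K q \<le> safe_prob_n P K n [q]"
  unfolding prob_safe_def by (rule cINF_lower) (auto intro!: bdd_belowI[where m=0] simp: spn01)

lemma ps01: "0 \<le> prob_safe P K q \<and> prob_safe P K q \<le> 1"
proof
  show "0 \<le> prob_safe P K q" unfolding prob_safe_def
    by (rule cINF_greatest) (auto simp: spn01)
  show "prob_safe P K q \<le> 1" using ps_le[of P K q 0] spn01[of P K 0 "[q]"] by linarith
qed

lemma ps_lim: "(\<lambda>n. safe_prob_n P K n [q]) \<longlonglongrightarrow> prob_safe P K q"
  unfolding prob_safe_def
  by (rule LIMSEQ_decseq_INF) (auto intro!: bdd_belowI[where m=0] simp: spn01 spn_decseq)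

lemma exp_one:
  assumes "\<And>x. x \<in> set_pmf p \<Longrightarrow> f x = (1::real)"
  shows "measure_pmf.expectation p f = 1"
proof -
  have "measure_pmf.expectation p f = measure_pmf.expectation p (\<lambda>_. 1)"
    by (rule integral_cong_AE) (auto simp: AE_measure_pmf_iff assms)
  then show ?thesis by simp
qed

lemma spn_one:
  assumes "\<And>h. h \<noteq> [] \<Longrightarrow> last h \<in> S \<Longrightarrow> set_pmf (K h) \<subseteq> S"
    and "\<And>x. x \<in> S \<Longrightarrow> P x"
  shows "h \<noteq> [] \<Longrightarrow> last h \<in> S \<Longrightarrow> safe_prob_n P K n h = 1"
proof (induction n arbitrary: h)
  case 0 then show ?case using assms by simp
next
  case (Suc n)
  have sub: "set_pmf (K h) \<subseteq> S" using assms(1) Suc.prems by blast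
  have "measure_pmf.expectation (K h) (\<lambda>t. safe_prob_n P K n (h @ [t])) = 1"
  proof (rule exp_one)
    fix x assume "x \<in> set_pmf (K h)"
    then have "x \<in> S" using sub by blast
    then show "safe_prob_n P K n (h @ [x]) = 1" using Suc.IH[of "h @ [x]"] by simp
  qed
  then show ?case using Suc assms by simp
qed

lemma ps_one:
  assumes "\<And>h. h \<noteq> [] \<Longrightarrow> last h \<in> S \<Longrightarrow> set_pmf (K h) \<subseteq> S"
    and "\<And>x. x \<in> S \<Longrightarrow> P x" and "q \<in> S"
  shows "prob_safe P K q = 1"
  unfolding prob_safe_def using spn_one[OF assms(1,2), where h="[q]"] assms(3) by simp

lemma ps_zero: "\<not> P q \<Longrightarrow> prob_safe P K q = 0"
  using ps_le[of P K q 0] ps01[of P K q] by simp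

lemma pmf_bind_fin:
  "pmf (bind_pmf (x::'m::finite pmf) f) t = (\<Sum>a\<in>UNIV. pmf (f a) t * pmf x a)"
  by (simp add: pmf_bind integral_measure_pmf_real[where A=UNIV])

lemma exp_fin:
  "measure_pmf.expectation (p::'s::finite pmf) f = (\<Sum>t\<in>UNIV. f t * pmf p t)"
  by (simp add: integral_measure_pmf_real[where A=UNIV])

lemma sum_pmf_UNIV: "(\<Sum>a\<in>UNIV. pmf (x::'m::finite pmf) a) = 1"
  by (rule sum_pmf_eq_1) auto

lemma Pre_sel_return:
  "Pre_sel G v x (return_pmf b) s = (\<Sum>t\<in>UNIV. v t * pmf (bind_pmf x (\<lambda>a. trans G s a b)) t)"
proof -
  have "Pre_sel G v x (return_pmf b) s = (\<Sum>a\<in>UNIV. \<Sum>t\<in>UNIV. v t * pmf (trans G s a b) t * pmf x a)"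
    unfolding Pre_sel_def by (simp add: pmf_return indicator_def if_distrib sum.delta cong: if_cong)
  also have "\<dots> = (\<Sum>t\<in>UNIV. \<Sum>a\<in>UNIV. v t * (pmf (trans G s a b) t * pmf x a))"
    by (subst sum.swap) (simp add: mult.assoc)
  also have "\<dots> = (\<Sum>t\<in>UNIV. v t * pmf (bind_pmf x (\<lambda>a. trans G s a b)) t)"
    by (simp add: pmf_bind_fin sum_distrib_left)
  finally show ?thesis .
qed

lemma Pre_sel_mix:
  "Pre_sel G v x1 x2 s = (\<Sum>b\<in>UNIV. pmf x2 b * Pre_sel G v x1 (return_pmf b) s)"
proof -
  have "Pre_sel G v x1 (return_pmf b) s = (\<Sum>a\<in>UNIV. \<Sum>t\<in>UNIV. v t * pmf (trans G s a b) t * pmf x1 a)" for b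
    unfolding Pre_sel_def by (simp add: pmf_return indicator_def if_distrib sum.delta cong: if_cong)
  then have "(\<Sum>b\<in>UNIV. pmf x2 b * Pre_sel G v x1 (return_pmf b) s)
     = (\<Sum>b\<in>UNIV. \<Sum>a\<in>UNIV. \<Sum>t\<in>UNIV. v t * pmf (trans G s a b) t * pmf x1 a * pmf x2 b)"
    by (simp add: sum_distrib_left sum_distrib_right mult_ac)
  also have "\<dots> = Pre_sel G v x1 x2 s"
    unfolding Pre_sel_def by (rule sum.swap)
  finally show ?thesis by simp
qed

lemma Pre_sel_ret01:
  assumes "\<And>t. 0 \<le> v t" "\<And>t. v t \<le> 1"
  shows "0 \<le> Pre_sel G v x (return_pmf b) s \<and> Pre_sel G v x (return_pmf b) s \<le> 1"
proof -
  let ?q = "bind_pmf x (\<lambda>a. trans G s a b)"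
  have "(\<Sum>t\<in>UNIV. v t * pmf ?q t) \<le> (\<Sum>t\<in>UNIV. pmf ?q t)"
    by (rule sum_mono) (use assms in \<open>auto intro: mult_left_le_one_le\<close>)
  moreover have "0 \<le> (\<Sum>t\<in>UNIV. v t * pmf ?q t)"
    by (rule sum_nonneg) (use assms in auto)
  ultimately show ?thesis by (simp add: Pre_sel_return sum_pmf_UNIV)
qed

lemma Pre_sel_lower:
  assumes "set_pmf x2 \<subseteq> M" "\<And>b. b \<in> M \<Longrightarrow> c \<le> Pre_sel G v x1 (return_pmf b) s"
  shows "c \<le> Pre_sel G v x1 x2 s"
proof -
  have "(\<Sum>b\<in>UNIV. pmf x2 b * c) \<le> (\<Sum>b\<in>UNIV. pmf x2 b * Pre_sel G v x1 (return_pmf b) s)"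
  proof (rule sum_mono)
    fix b
    show "pmf x2 b * c \<le> pmf x2 b * Pre_sel G v x1 (return_pmf b) s"
    proof (cases "b \<in> set_pmf x2")
      case True
      then have "c \<le> Pre_sel G v x1 (return_pmf b) s" using assms by blast
      then show ?thesis by (simp add: mult_left_mono)
    next
      case False then show ?thesis by (simp add: set_pmf_iff)
    qed
  qed
  then show ?thesis by (simp add: Pre_sel_mix[of G v x1 x2] sum_distrib_right[symmetric] sum_pmf_UNIV)
qed

lemma Pre_sel_upper:
  assumes "set_pmf x2 \<subseteq> M" "\<And>b. b \<in> M \<Longrightarrow> Pre_sel G v x1 (return_pmf b) s \<le> c"
  shows "Pre_sel G v x1 x2 s \<le> c"
proof -
  have "(\<Sum>b\<in>UNIV. pmf x2 b * Pre_sel G v x1 (return_pmf b) s) \<le> (\<Sum>b\<in>UNIV. pmf x2 b * c)"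
  proof (rule sum_mono)
    fix b
    show "pmf x2 b * Pre_sel G v x1 (return_pmf b) s \<le> pmf x2 b * c"
    proof (cases "b \<in> set_pmf x2")
      case True
      then have "Pre_sel G v x1 (return_pmf b) s \<le> c" using assms by blast
      then show ?thesis by (simp add: mult_left_mono)
    next
      case False then show ?thesis by (simp add: set_pmf_iff)
    qed
  qed
  then show ?thesis by (simp add: Pre_sel_mix[of G v x1 x2] sum_distrib_right[symmetric] sum_pmf_UNIV)
qed

lemma ret_sel: "b \<in> M s \<Longrightarrow> return_pmf b \<in> sel_at M s"
  by (simp add: sel_at_def)

lemma Pre1_fix_Min:
  assumes "mv2 G s \<noteq> {}"
  shows "Pre1_fix G v x s = (MIN b\<in>mv2 G s. Pre_sel G v x (return_pmf b) s)"
proof -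
  let ?m = "(MIN b\<in>mv2 G s. Pre_sel G v x (return_pmf b) s)"
  have "?m \<in> (\<lambda>b. Pre_sel G v x (return_pmf b) s) ` mv2 G s"
    by (rule Min_in) (use assms in auto)
  then obtain b0 where b0: "b0 \<in> mv2 G s" "Pre_sel G v x (return_pmf b0) s = ?m"
    by force
  have low: "?m \<le> Pre_sel G v x x2 s" if "x2 \<in> sel_at (mv2 G) s" for x2
    by (rule Pre_sel_lower[of x2 "mv2 G s"]) (use that in \<open>auto simp: sel_at_def\<close>)
  show ?thesis unfolding Pre1_fix_def
  proof (rule antisym)
    show "(INF x2\<in>sel_at (mv2 G) s. Pre_sel G v x x2 s) \<le> ?m"
    proof -
      have bb: "bdd_below ((\<lambda>x2. Pre_sel G v x x2 s) ` sel_at (mv2 G) s)"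
        using low by (intro bdd_belowI2[where m="?m"]) auto
      have "(INF x2\<in>sel_at (mv2 G) s. Pre_sel G v x x2 s) \<le> Pre_sel G v x (return_pmf b0) s"
        by (rule cINF_lower[OF bb]) (rule ret_sel[of b0 "mv2 G" s, OF b0(1)])
      then show ?thesis using b0(2) by simp
    qed
    show "?m \<le> (INF x2\<in>sel_at (mv2 G) s. Pre_sel G v x x2 s)"
      by (rule cINF_greatest) (auto intro: low ret_sel b0)
  qed
qed

lemma Pre1_fix_le:
  assumes "mv2 G s \<noteq> {}" "b \<in> mv2 G s"
  shows "Pre1_fix G v x s \<le> Pre_sel G v x (return_pmf b) s"
  using assms by (simp add: Pre1_fix_Min)

lemma Pre1_fix_ge:
  assumes "mv2 G s \<noteq> {}" "\<And>b. b \<in> mv2 G s \<Longrightarrow> c \<le> Pre_sel G v x (return_pmf b) s"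
  shows "c \<le> Pre1_fix G v x s"
  using assms by (simp add: Pre1_fix_Min)

lemma Pre1_fix_le_sel:
  assumes "mv2 G s \<noteq> {}" "x2 \<in> sel_at (mv2 G) s"
  shows "Pre1_fix G v x s \<le> Pre_sel G v x x2 s"
  using assms by (intro Pre_sel_lower[of x2 "mv2 G s"]) (auto simp: sel_at_def Pre1_fix_le)

lemma Pre1_fix01:
  assumes "mv2 G s \<noteq> {}" "\<And>t. 0 \<le> v t" "\<And>t. v t \<le> 1"
  shows "0 \<le> Pre1_fix G v x s \<and> Pre1_fix G v x s \<le> 1"
proof -
  obtain b where b: "b \<in> mv2 G s" using assms by auto
  have "0 \<le> Pre1_fix G v x s"
    by (rule Pre1_fix_ge[OF assms(1)]) (use Pre_sel_ret01[of v, OF assms(2,3)] in blast)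
  moreover have "Pre1_fix G v x s \<le> 1"
    using Pre1_fix_le[OF assms(1) b, of v x] Pre_sel_ret01[of v, OF assms(2,3), of G x b s] by linarith
  ultimately show ?thesis by blast
qed

lemma Pre1_upper:
  assumes "mv2 G s \<noteq> {}" "\<And>t. 0 \<le> v t" "\<And>t. v t \<le> 1" "x \<in> sel_at (mv1 G) s"
  shows "Pre1_fix G v x s \<le> Pre1 G v s"
  unfolding Pre1_def
  by (rule cSUP_upper) (use assms Pre1_fix01[OF assms(1-3)] in \<open>auto intro!: bdd_aboveI2[where M=1]\<close>)

lemma cont_Min:
  assumes "finite B" "B \<noteq> {}" "\<And>b. b \<in> B \<Longrightarrow> continuous_on S (g b)"
  shows "continuous_on S (\<lambda>y. MIN b\<in>B. (g b y :: real))"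
  using assms
proof (induction B rule: finite_ne_induct)
  case (singleton x) then show ?case by simp
next
  case (insert x F)
  have "continuous_on S (\<lambda>y. min (g x y) (MIN b\<in>F. g b y))"
    using insert by (intro continuous_on_min) auto
  then show ?case using insert by simp
qed

lemma Pre_sel_lin:
  "Pre_sel G v x (return_pmf b) s = (\<Sum>a\<in>UNIV. pmf x a * (\<Sum>t\<in>UNIV. v t * pmf (trans G s a b) t))"
proof -
  have "Pre_sel G v x (return_pmf b) s = (\<Sum>t\<in>UNIV. \<Sum>a\<in>UNIV. v t * (pmf (trans G s a b) t * pmf x a))"
    by (simp add: Pre_sel_return pmf_bind_fin sum_distrib_left)
  also have "\<dots> = (\<Sum>a\<in>UNIV. pmf x a * (\<Sum>t\<in>UNIV. v t * pmf (trans G s a b) t))"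
    by (subst sum.swap) (simp add: sum_distrib_left mult_ac)
  finally show ?thesis .
qed

lemma attain:
  fixes G :: "('s::finite, 'm::finite) cgs"
  assumes ne1: "mv1 G s \<noteq> {}" and ne2: "mv2 G s \<noteq> {}"
  shows "\<exists>x\<in>sel_at (mv1 G) s. Pre1_fix G v x s = Pre1 G v s"
proof -
  define c where "c a b = (\<Sum>t\<in>UNIV. v t * pmf (trans G s a b) t)" for a b
  define H where "H y = (MIN b\<in>mv2 G s. \<Sum>a\<in>UNIV. y $ a * c a b)" for y :: "real^'m"
  define vc where "vc x = (\<chi> a. pmf x a)" for x :: "'m pmf"
  define M where "M = mv1 G s"
  define S where "S = cbox (0::real^'m) 1 \<inter> {y. (\<forall>a. a \<notin> M \<longrightarrow> y $ a = 0) \<and> (\<Sum>a\<in>UNIV. y $ a) = 1}"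
  have HP: "Pre1_fix G v x s = H (vc x)" for x
    by (simp add: Pre1_fix_Min[OF ne2] H_def vc_def c_def Pre_sel_lin)
  have vcS: "vc x \<in> S" if "x \<in> sel_at (mv1 G) s" for x
    using that by (auto simp: S_def vc_def mem_box_cart pmf_le_1 sum_pmf_UNIV M_def sel_at_def
        set_pmf_iff)
  have cl: "closed {y::real^'m. (\<forall>a. a \<notin> M \<longrightarrow> y $ a = 0) \<and> (\<Sum>a\<in>UNIV. y $ a) = 1}"
    by (intro closed_Collect_conj closed_Collect_all closed_Collect_imp closed_Collect_eq
        open_Collect_const continuous_intros)
  have cpt: "compact S" unfolding S_def using cl by (intro compact_Int_closed compact_cbox)
  obtain a0 where a0: "a0 \<in> M" using ne1 M_def by auto
  have "return_pmf a0 \<in> sel_at (mv1 G) s" using a0 M_def by (simp add: sel_at_def)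
  then have Sne: "S \<noteq> {}" using vcS by blast
  have cont: "continuous_on S H"
    unfolding H_def by (rule cont_Min) (use ne2 in \<open>auto intro!: continuous_intros\<close>)
  obtain y where yS: "y \<in> S" and ymax: "\<And>z. z \<in> S \<Longrightarrow> H z \<le> H y"
    using continuous_attains_sup[OF cpt Sne cont] by blast
  have ynn: "\<And>a. 0 \<le> y $ a" and y0: "\<And>a. a \<notin> M \<Longrightarrow> y $ a = 0" and ys: "(\<Sum>a\<in>UNIV. y $ a) = 1"
    using yS by (auto simp: S_def mem_box_cart)
  have prob: "(\<integral>\<^sup>+a. ennreal (y $ a) \<partial>count_space UNIV) = 1"
    by (simp add: nn_integral_count_space_finite ynn ys)
  define xs where "xs = embed_pmf (\<lambda>a. y $ a)"
  have pxs: "pmf xs a = y $ a" for a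
    unfolding xs_def by (rule pmf_embed_pmf[OF ynn prob])
  have "set_pmf xs \<subseteq> M" using y0 by (auto simp: set_pmf_iff pxs) blast
  then have xsel: "xs \<in> sel_at (mv1 G) s" by (simp add: sel_at_def M_def)
  have vxs: "vc xs = y" by (simp add: vc_def pxs vec_eq_iff)
  have le: "Pre1_fix G v x s \<le> Pre1_fix G v xs s" if "x \<in> sel_at (mv1 G) s" for x
    using ymax[OF vcS[OF that]] by (simp add: HP vxs)
  have "Pre1 G v s = Pre1_fix G v xs s"
    unfolding Pre1_def
  proof (rule antisym)
    show "(SUP x\<in>sel_at (mv1 G) s. Pre1_fix G v x s) \<le> Pre1_fix G v xs s"
      by (rule cSUP_least) (use xsel le in auto)
    show "Pre1_fix G v xs s \<le> (SUP x\<in>sel_at (mv1 G) s. Pre1_fix G v x s)"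
      by (rule cSUP_upper[OF xsel]) (use le in \<open>auto intro!: bdd_aboveI2\<close>)
  qed
  then show ?thesis using xsel by auto
qed

lemma ps_nn[simp]: "0 \<le> prob_safe P K q" by (rule conjunct1[OF ps01])
lemma ps_le1[simp]: "prob_safe P K q \<le> 1" by (rule conjunct2[OF ps01])

lemma strat_ex:
  fixes Gam :: "'s \<Rightarrow> 'm::finite set"
  assumes "\<forall>s. Gam s \<noteq> {}"
  shows "strat Gam (\<lambda>h. pmf_of_set (Gam (last h)))"
  using assms by (simp add: strat_def)

lemma vs_bounds:
  fixes G :: "('s::finite, 'm::finite) cgs"
  assumes "\<forall>s. mv2 G s \<noteq> {}"
  shows "0 \<le> val1_strat G F \<pi>1 s \<and> val1_strat G F \<pi>1 s \<le> 1"
proof -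
  have ne: "{\<pi>2. strat (mv2 G) \<pi>2} \<noteq> {}" using strat_ex[OF assms] by blast
  have "0 \<le> val1_strat G F \<pi>1 s" unfolding val1_strat_def
    by (rule cINF_greatest[OF ne]) (simp add: ps01)
  moreover have "val1_strat G F \<pi>1 s \<le> 1" unfolding val1_strat_def
    using ne ps01 by (auto intro!: cINF_lower2 bdd_belowI2[where m=0])
  ultimately show ?thesis by blast
qed

lemma vs_le_ps:
  assumes "strat (mv2 G) \<pi>2"
  shows "val1_strat G F \<pi>1 s \<le> prob_safe (\<lambda>t. t \<in> F) (cgs_kernel G \<pi>1 \<pi>2) s"
  unfolding val1_strat_def
  by (rule cINF_lower) (use assms ps01 in \<open>auto intro!: bdd_belowI2[where m=0]\<close>)

lemma vs_approx:
  fixes G :: "('s::finite, 'm::finite) cgs"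
  assumes "\<forall>s. mv2 G s \<noteq> {}" "e > 0"
  shows "\<exists>\<pi>2. strat (mv2 G) \<pi>2 \<and> prob_safe (\<lambda>t. t \<in> F) (cgs_kernel G \<pi>1 \<pi>2) s < val1_strat G F \<pi>1 s + e"
proof -
  have ne: "{\<pi>2. strat (mv2 G) \<pi>2} \<noteq> {}" using strat_ex[OF assms(1)] by blast
  have "(INF \<pi>2 \<in> {\<pi>2. strat (mv2 G) \<pi>2}. prob_safe (\<lambda>t. t \<in> F) (cgs_kernel G \<pi>1 \<pi>2) s) < val1_strat G F \<pi>1 s + e"
    using assms(2) by (simp add: val1_strat_def)
  then show ?thesis
    by (subst (asm) cINF_less_iff) (use ne ps01 in \<open>auto intro!: bdd_belowI2[where m=0]\<close>)
qed

lemma val1_ge_vs: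
  fixes G :: "('s::finite, 'm::finite) cgs"
  assumes "\<forall>s. mv2 G s \<noteq> {}" "strat (mv1 G) \<pi>1"
  shows "val1_strat G F \<pi>1 s \<le> val1 G F s"
  unfolding val1_def
  by (rule cSUP_upper) (use assms vs_bounds[OF assms(1)] in \<open>auto intro!: bdd_aboveI2[where M=1]\<close>)

lemma val1_bounds:
  fixes G :: "('s::finite, 'm::finite) cgs"
  assumes "\<forall>s. mv1 G s \<noteq> {}" "\<forall>s. mv2 G s \<noteq> {}"
  shows "0 \<le> val1 G F s \<and> val1 G F s \<le> 1"
proof -
  have ne: "{\<pi>1. strat (mv1 G) \<pi>1} \<noteq> {}" using strat_ex[OF assms(1)] by blast
  then obtain p where p: "strat (mv1 G) p" by blast
  have "0 \<le> val1 G F s"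
    using val1_ge_vs[OF assms(2) p, of F s] vs_bounds[OF assms(2), of F p s] by linarith
  moreover have "val1 G F s \<le> 1" unfolding val1_def
    by (rule cSUP_least[OF ne]) (use vs_bounds[OF assms(2)] in auto)
  ultimately show ?thesis by blast
qed

lemma vs_notF:
  fixes G :: "('s::finite, 'm::finite) cgs"
  assumes "\<forall>s. mv2 G s \<noteq> {}" "s \<notin> F"
  shows "val1_strat G F \<pi>1 s = 0"
proof -
  obtain p where p: "strat (mv2 G) p" using strat_ex[OF assms(1)] by blast
  show ?thesis using vs_le_ps[OF p, of F \<pi>1 s] ps_zero[of "\<lambda>t. t \<in> F" s] assms(2)
      vs_bounds[OF assms(1), of F \<pi>1 s] by auto
qed

lemma val1_notF:
  fixes G :: "('s::finite, 'm::finite) cgs"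
  assumes "\<forall>s. mv1 G s \<noteq> {}" "\<forall>s. mv2 G s \<noteq> {}" "s \<notin> F"
  shows "val1 G F s = 0"
proof -
  have ne: "{\<pi>1. strat (mv1 G) \<pi>1} \<noteq> {}" using strat_ex[OF assms(1)] by blast
  have "val1 G F s \<le> 0" unfolding val1_def
    by (rule cSUP_least[OF ne]) (use vs_notF[OF assms(2,3)] in auto)
  then show ?thesis using val1_bounds[OF assms(1,2), of F s] by linarith
qed

lemma spn_shift:
  assumes "\<forall>g. g \<noteq> [] \<longrightarrow> hd g = t \<longrightarrow> K (s # g) = K' g"
  shows "g \<noteq> [] \<Longrightarrow> hd g = t \<Longrightarrow> safe_prob_n P K n (s # g) = safe_prob_n P K' n g"
proof (induction n arbitrary: g)
  case 0 then show ?case by simp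
next
  case (Suc n)
  have e: "safe_prob_n P K n (s # (g @ [x])) = safe_prob_n P K' n (g @ [x])" for x
    using Suc by simp
  have "K (s # g) = K' g" using assms Suc.prems by blast
  then show ?case using Suc.prems e by simp
qed

lemma one_step:
  fixes G :: "('s::finite, 'm::finite) cgs"
  assumes ne2: "\<forall>s. mv2 G s \<noteq> {}" and p1: "strat (mv1 G) \<pi>1" and b: "b \<in> mv2 G s" and e: "e > 0"
  shows "val1_strat G F \<pi>1 s \<le> Pre_sel G (val1 G F) (\<pi>1 [s]) (return_pmf b) s + e"
proof -
  define P where "P = (\<lambda>t. t \<in> F)"
  define d where "d = (\<lambda>h. pmf_of_set (mv2 G (last h)))"
  have sd: "strat (mv2 G) d" unfolding d_def by (rule strat_ex[OF ne2])
  define p1t where "p1t t = (\<lambda>h. \<pi>1 (s # h))" for t :: 's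
  have sp1t: "strat (mv1 G) (p1t t)" for t
    using p1 unfolding strat_def p1t_def by (metis last_ConsR list.distinct(1))
  have "\<forall>t. \<exists>p. strat (mv2 G) p \<and>
      prob_safe P (cgs_kernel G (p1t t) p) t < val1_strat G F (p1t t) t + e"
    using vs_approx[OF ne2 e] unfolding P_def by blast
  then have "\<exists>f. \<forall>t. strat (mv2 G) (f t) \<and>
      prob_safe P (cgs_kernel G (p1t t) (f t)) t < val1_strat G F (p1t t) t + e"
    by (rule choice)
  then obtain p2t where p2t: "\<And>t. strat (mv2 G) (p2t t) \<and>
      prob_safe P (cgs_kernel G (p1t t) (p2t t)) t < val1_strat G F (p1t t) t + e"
    by blast
  define p2 where "p2 h = (case h of [] \<Rightarrow> d h | [x] \<Rightarrow> (if x = s then return_pmf b else d h)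
      | x # y # r \<Rightarrow> (if x = s then p2t y (y # r) else d h))" for h
  have sp2: "strat (mv2 G) p2"
    unfolding strat_def
  proof (intro allI impI)
    fix h :: "'s list" assume "h \<noteq> []"
    note hne = this
    have dh: "set_pmf (d h) \<subseteq> mv2 G (last h)" using sd hne by (simp add: strat_def)
    show "set_pmf (p2 h) \<subseteq> mv2 G (last h)"
    proof (cases h)
      case Nil then show ?thesis using hne by simp
    next
      case (Cons x r)
      show ?thesis
      proof (cases r)
        case Nil then show ?thesis using Cons dh b by (simp add: p2_def)
      next
        case (Cons y r')
        have "set_pmf (p2t y (y # r')) \<subseteq> mv2 G (last (y # r'))"
          using conjunct1[OF p2t[of y]] unfolding strat_def by (metis list.distinct(1))
        then show ?thesis using Cons \<open>h = x # r\<close> dh by (auto simp: p2_def split: if_splits)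
      qed
    qed
  qed
  define K where "K = cgs_kernel G \<pi>1 p2"
  define Kt where "Kt t = cgs_kernel G (p1t t) (p2t t)" for t
  have shift: "safe_prob_n P K n [s, t] = safe_prob_n P (Kt t) n [t]" for n t
  proof -
    have "\<forall>g. g \<noteq> [] \<longrightarrow> hd g = t \<longrightarrow> K (s # g) = Kt t g"
    proof (intro allI impI)
      fix g :: "'s list" assume "g \<noteq> []" "hd g = t"
      then obtain r where g: "g = t # r" by (cases g) auto
      show "K (s # g) = Kt t g" by (simp add: K_def Kt_def cgs_kernel_def g p2_def p1t_def)
    qed
    then show ?thesis using spn_shift[of t K s "Kt t" "[t]" P n] by simp
  qed
  define q where "q = bind_pmf (\<pi>1 [s]) (\<lambda>a. trans G s a b)"
  have Ks: "K [s] = q" by (simp add: K_def cgs_kernel_def p2_def q_def bind_return_pmf)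
  define X where "X n = (\<Sum>t\<in>UNIV. safe_prob_n P (Kt t) n [t] * pmf q t)" for n
  have step: "safe_prob_n P K (Suc n) [s] \<le> X n" for n
  proof (cases "P s")
    case True
    then have "safe_prob_n P K (Suc n) [s] = measure_pmf.expectation q (\<lambda>t. safe_prob_n P K n [s, t])"
      by (simp add: Ks)
    also have "\<dots> = X n" by (simp add: exp_fin X_def shift)
    finally show ?thesis by simp
  next
    case False
    have "0 \<le> X n" unfolding X_def by (intro sum_nonneg) (simp add: spn01)
    then show ?thesis using False by simp
  qed
  define ps where "ps t = prob_safe P (Kt t) t" for t
  have lim: "X \<longlonglongrightarrow> (\<Sum>t\<in>UNIV. ps t * pmf q t)"
    unfolding X_def ps_def by (intro tendsto_sum tendsto_mult_right ps_lim)
  have "prob_safe P K s \<le> (\<Sum>t\<in>UNIV. ps t * pmf q t)"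
  proof (rule LIMSEQ_le_const[OF lim], intro exI allI impI)
    fix n :: nat
    show "prob_safe P K s \<le> X n" using ps_le[of P K s "Suc n"] step[of n] by linarith
  qed
  also have "\<dots> \<le> (\<Sum>t\<in>UNIV. (val1 G F t + e) * pmf q t)"
  proof (rule sum_mono)
    fix t
    have "ps t \<le> val1 G F t + e"
      using p2t[of t] val1_ge_vs[OF ne2 sp1t[of t], of F t] by (simp add: ps_def Kt_def)
    then show "ps t * pmf q t \<le> (val1 G F t + e) * pmf q t" by (simp add: mult_right_mono)
  qed
  also have "\<dots> = Pre_sel G (val1 G F) (\<pi>1 [s]) (return_pmf b) s + e"
    by (simp add: Pre_sel_return q_def[symmetric] distrib_right sum.distrib sum_distrib_left[symmetric] sum_pmf_UNIV)
  finally have "prob_safe P K s \<le> Pre_sel G (val1 G F) (\<pi>1 [s]) (return_pmf b) s + e" .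
  moreover have "val1_strat G F \<pi>1 s \<le> prob_safe P K s"
    unfolding K_def P_def by (rule vs_le_ps[OF sp2])
  ultimately show ?thesis by linarith
qed

lemma val1_le_Pre1:
  fixes G :: "('s::finite, 'm::finite) cgs"
  assumes ne1: "\<forall>s. mv1 G s \<noteq> {}" and ne2: "\<forall>s. mv2 G s \<noteq> {}"
  shows "val1 G F s \<le> Pre1 G (val1 G F) s"
proof (rule field_le_epsilon)
  fix e :: real assume e: "0 < e"
  have ne: "{\<pi>1. strat (mv1 G) \<pi>1} \<noteq> {}" using strat_ex[OF ne1] by blast
  have v0: "\<And>t. 0 \<le> val1 G F t" and v1: "\<And>t. val1 G F t \<le> 1"
    using val1_bounds[OF ne1 ne2] by blast+
  show "val1 G F s \<le> Pre1 G (val1 G F) s + e" unfolding val1_def[of G F s]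
  proof (rule cSUP_least[OF ne])
    fix p1 assume "p1 \<in> {\<pi>1. strat (mv1 G) \<pi>1}"
    then have p1: "strat (mv1 G) p1" by simp
    have A: "val1_strat G F p1 s - e \<le> Pre1_fix G (val1 G F) (p1 [s]) s"
    proof (rule Pre1_fix_ge)
      show "mv2 G s \<noteq> {}" using ne2 by blast
      fix b assume "b \<in> mv2 G s"
      from one_step[OF ne2 p1 this e, of F]
      show "val1_strat G F p1 s - e \<le> Pre_sel G (val1 G F) (p1 [s]) (return_pmf b) s" by linarith
    qed
    have "p1 [s] \<in> sel_at (mv1 G) s" using p1 unfolding strat_def sel_at_def
      by (metis last_ConsL list.distinct(1) mem_Collect_eq)
    then have "Pre1_fix G (val1 G F) (p1 [s]) s \<le> Pre1 G (val1 G F) s"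
      using Pre1_upper[of G s "val1 G F"] ne2 v0 v1 by blast
    with A show "val1_strat G F p1 s \<le> Pre1 G (val1 G F) s + e" by linarith
  qed
qed

lemma alg_step_cases:
  fixes G :: "('s::finite, 'm::finite) cgs"
  assumes "alg_step G F \<gamma> \<gamma>'"
  obtains (I) \<xi>1 where "selector (mv1 G) \<xi>1" "\<gamma>' = (\<lambda>s. if s \<in> Iset G F \<gamma> then \<xi>1 s else \<gamma> s)"
  | (U) \<pi>b :: "('s, 'm) tbst \<Rightarrow> ('s, 'm) tbst" where "\<forall>s. \<pi>b (TB1 s) \<in> tb_succ G (vals G F \<gamma>) (TB1 s)"
      "\<forall>s. s \<notin> Uset G F \<gamma> \<longrightarrow> \<gamma>' s = \<gamma> s"
      "\<forall>s\<in>Uset G F \<gamma>. \<forall>A B. \<pi>b (TB1 s) = TB2 s A B \<longrightarrow>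
               \<gamma>' s \<in> OptSel G (vals G F \<gamma>) s \<and> set_pmf (\<gamma>' s) = A \<and> CountOpt G (vals G F \<gamma>) s (\<gamma>' s) = B"
proof -
  show thesis
    using assms unfolding alg_step_def Let_def
    apply (elim disjE conjE exE)
     apply (rule I; assumption)
    subgoal for pb by (rule U[of pb]; assumption)
    done
qed

lemma sel_alg:
  fixes G :: "('s::finite, 'm::finite) cgs"
  assumes "alg_iter G F i \<gamma>" "\<forall>s. mv1 G s \<noteq> {}"
  shows "selector (mv1 G) \<gamma>"
  using assms(1)
proof (induction rule: alg_iter.induct)
  case init then show ?case using assms(2) by (simp add: selector_def unif_sel_def)
next
  case (step i \<gamma> \<gamma>')
  from step.hyps(2) show ?case
  proof (cases rule: alg_step_cases)
    case (I \<xi>1)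
    show ?thesis unfolding selector_def
    proof
      fix s
      show "set_pmf (\<gamma>' s) \<subseteq> mv1 G s"
        using I step.IH unfolding selector_def by (cases "s \<in> Iset G F \<gamma>") simp_all
    qed
  next
    case (U \<pi>b)
    show ?thesis unfolding selector_def
    proof
      fix s
      show "set_pmf (\<gamma>' s) \<subseteq> mv1 G s"
      proof (cases "s \<in> Uset G F \<gamma>")
        case True
        have "\<pi>b (TB1 s) \<in> tb_succ G (vals G F \<gamma>) (TB1 s)" using U(1) by blast
        then obtain A B where AB: "\<pi>b (TB1 s) = TB2 s A B" by auto
        have "\<gamma>' s \<in> OptSel G (vals G F \<gamma>) s" using U(3) True AB by blast
        then show ?thesis by (simp add: OptSel_def sel_at_def)
      next
        case False
        then have "\<gamma>' s = \<gamma> s" using U(2) by blast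
        then show ?thesis using step.IH by (simp add: selector_def)
      qed
    qed
  qed
qed

lemma strat_mem:
  "selector Gam \<gamma> \<Longrightarrow> strat Gam (memoryless \<gamma>)"
  by (simp add: selector_def strat_def memoryless_def)

lemma vs_W1:
  fixes G :: "('s::finite, 'm::finite) cgs"
  assumes ne1: "\<forall>s. mv1 G s \<noteq> {}" and ne2: "\<forall>s. mv2 G s \<noteq> {}"
    and W: "s \<in> W1 G F" and ab: "absorbing G s" and sel: "selector (mv1 G) \<gamma>"
  shows "vals G F \<gamma> s = 1"
proof -
  have sF: "s \<in> F"
  proof (rule ccontr)
    assume "s \<notin> F"
    then have "val1 G F s = 0" by (rule val1_notF[OF ne1 ne2])
    then show False using W by (simp add: W1_def)
  qed
  have ne: "{\<pi>2. strat (mv2 G) \<pi>2} \<noteq> {}" using strat_ex[OF ne2] by blast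
  have one: "prob_safe (\<lambda>t. t \<in> F) (cgs_kernel G (memoryless \<gamma>) p2) s = 1" if p2: "strat (mv2 G) p2" for p2
  proof (rule ps_one[where S="{s}"])
    fix h :: "'s list" assume h: "h \<noteq> []" "last h \<in> {s}"
    have "trans G s a b = return_pmf s" if a: "a \<in> set_pmf (\<gamma> s)" and b: "b \<in> set_pmf (p2 h)" for a b
    proof -
      have "a \<in> mv1 G s" using sel a by (auto simp: selector_def)
      moreover have "b \<in> mv2 G s" using p2 b h by (auto simp: strat_def)
      ultimately show ?thesis using ab by (simp add: absorbing_def)
    qed
    then show "set_pmf (cgs_kernel G (memoryless \<gamma>) p2 h) \<subseteq> {s}"
      using h by (auto simp: cgs_kernel_def memoryless_def)
  next
    show "s \<in> {s}" by simp
  next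
    fix x assume "x \<in> {s}" then show "x \<in> F" using sF by simp
  qed
  have "val1_strat G F (memoryless \<gamma>) s = (INF p2 \<in> {\<pi>2. strat (mv2 G) \<pi>2}. (1::real))"
    unfolding val1_strat_def by (rule INF_cong[OF refl]) (simp add: one)
  also have "\<dots> = 1" by (rule cINF_const[OF ne])
  finally show ?thesis .
qed

lemma Pre_sel_diff:
  "Pre_sel G w x (return_pmf b) t - Pre_sel G v x (return_pmf b) t
    = (\<Sum>u\<in>UNIV. (w u - v u) * pmf (bind_pmf x (\<lambda>a. trans G t a b)) u)"
  by (simp add: Pre_sel_return sum_subtractf[symmetric] left_diff_distrib)

lemma wsum_le:
  assumes "\<And>u. d u \<le> (c::real)"
  shows "(\<Sum>u\<in>UNIV. d u * pmf (q::'s::finite pmf) u) \<le> c"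
proof -
  have "(\<Sum>u\<in>UNIV. d u * pmf q u) \<le> (\<Sum>u\<in>UNIV. c * pmf q u)"
    by (rule sum_mono) (simp add: assms mult_right_mono)
  also have "\<dots> = c" by (simp add: sum_distrib_left[symmetric] sum_pmf_UNIV)
  finally show ?thesis .
qed

lemma wsum_eq:
  assumes "\<And>u. d u \<le> (c::real)" "c \<le> (\<Sum>u\<in>UNIV. d u * pmf (q::'s::finite pmf) u)"
    and "u \<in> set_pmf q"
  shows "d u = c"
proof -
  have "(\<Sum>u\<in>UNIV. (c - d u) * pmf q u) = c - (\<Sum>u\<in>UNIV. d u * pmf q u)"
    by (simp add: left_diff_distrib sum_subtractf sum_distrib_left[symmetric] sum_pmf_UNIV)
  then have le: "(\<Sum>u\<in>UNIV. (c - d u) * pmf q u) \<le> 0" using assms(2) by simp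
  have nn: "\<And>u. 0 \<le> (c - d u) * pmf q u" using assms(1) by simp
  then have "(\<Sum>u\<in>UNIV. (c - d u) * pmf q u) = 0" using le by (meson antisym sum_nonneg)
  then have "(c - d u) * pmf q u = 0" using nn by (simp add: sum_nonneg_eq_0_iff)
  moreover have "0 < pmf q u" using assms(3) by (rule pmf_positive)
  ultimately show ?thesis by simp
qed

theorem theorem7:
  fixes G :: "('s::finite, 'm::finite) cgs" and F :: "'s set"
    and i :: nat and \<gamma> :: "'s \<Rightarrow> 'm pmf"
  assumes "\<forall>s. mv1 G s \<noteq> {}"
    and "\<forall>s. mv2 G s \<noteq> {}"
    and "\<forall>s\<in>W1 G F \<union> (- F). absorbing G s"
    and "alg_iter G F i \<gamma>"
    and "Iset G F \<gamma> = {}"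
    and "Uset G F \<gamma> = {}"
  shows "optimal1 G F (memoryless \<gamma>) \<and> val1_strat G F (memoryless \<gamma>) = val1 G F"
proof -
  note ne1 = assms(1) and ne2 = assms(2) and absb = assms(3) and Iemp = assms(5) and Uemp = assms(6)
  have sel: "selector (mv1 G) \<gamma>" by (rule sel_alg[OF assms(4) ne1])
  have st: "strat (mv1 G) (memoryless \<gamma>)" by (rule strat_mem[OF sel])
  define v where "v = vals G F \<gamma>"
  define w where "w = val1 G F"
  have v0: "\<And>t. 0 \<le> v t" and v1: "\<And>t. v t \<le> 1"
    using vs_bounds[OF ne2] unfolding v_def by blast+
  have w0: "\<And>t. 0 \<le> w t" and w1: "\<And>t. w t \<le> 1"
    using val1_bounds[OF ne1 ne2] unfolding w_def by blast+
  have vw: "\<And>t. v t \<le> w t" unfolding v_def w_def by (rule val1_ge_vs[OF ne2 st])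
  define d where "d t = w t - v t" for t
  have key: "d t \<le> 0" for t
  proof (rule ccontr)
    assume "\<not> d t \<le> 0"
    define c where "c = Max (range d)"
    have dc: "\<And>u. d u \<le> c" unfolding c_def by (rule Max_ge) auto
    have cpos: "0 < c" using dc[of t] \<open>\<not> d t \<le> 0\<close> by linarith
    have "c \<in> range d" unfolding c_def by (rule Max_in) auto
    then obtain s0 where s0: "d s0 = c" by auto
    define Z where "Z = {u. d u = c}"
    have s0Z: "s0 \<in> Z" using s0 by (simp add: Z_def)
    have ZF: "u \<in> F" if "u \<in> Z" for u
    proof (rule ccontr)
      assume "u \<notin> F"
      then have "v u = 0" "w u = 0" unfolding v_def w_def
        using vs_notF[OF ne2] val1_notF[OF ne1 ne2] by auto
      then show False using that cpos by (simp add: Z_def d_def)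
    qed
    have ZW: "u \<notin> W1 G F" if "u \<in> Z" for u
    proof
      assume W: "u \<in> W1 G F"
      then have "w u = 1" by (simp add: W1_def w_def)
      moreover have "v u = 1" unfolding v_def
        by (rule vs_W1[OF ne1 ne2 W _ sel]) (use absb W in blast)
      ultimately show False using that cpos by (simp add: Z_def d_def)
    qed
    have ZI: "Pre1 G v u \<le> v u" if "u \<in> Z" for u
      using Iemp ZF[OF that] ZW[OF that] unfolding Iset_def v_def by auto
    define xi where "xi u = (if u \<in> Z then (SOME x. x \<in> sel_at (mv1 G) u \<and> Pre1_fix G w x u = Pre1 G w u)
        else (SOME x. x \<in> OptSel G v u))" for u
    have xiZ: "xi u \<in> sel_at (mv1 G) u \<and> Pre1_fix G w (xi u) u = Pre1 G w u" if "u \<in> Z" for u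
    proof -
      have "\<exists>x. x \<in> sel_at (mv1 G) u \<and> Pre1_fix G w x u = Pre1 G w u"
        using attain[of G u w] ne1 ne2 by blast
      then have "(SOME x. x \<in> sel_at (mv1 G) u \<and> Pre1_fix G w x u = Pre1 G w u) \<in> sel_at (mv1 G) u \<and>
         Pre1_fix G w (SOME x. x \<in> sel_at (mv1 G) u \<and> Pre1_fix G w x u = Pre1 G w u) u = Pre1 G w u"
        by (rule someI_ex)
      then show ?thesis using that unfolding xi_def by simp
    qed
    have wP: "w u \<le> Pre1 G w u" for u
      using val1_le_Pre1[OF ne1 ne2, of F u] unfolding w_def .
    have xiw: "w u \<le> Pre1_fix G w (xi u) u" if "u \<in> Z" for u
      using xiZ[OF that] wP[of u] by linarith
    have xiopt: "xi u \<in> OptSel G v u" for u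
    proof (cases "u \<in> Z")
      case False
      have "\<exists>x. x \<in> OptSel G v u"
        using attain[of G u v] ne1 ne2 by (auto simp: OptSel_def)
      then have "(SOME x. x \<in> OptSel G v u) \<in> OptSel G v u" by (rule someI_ex)
      then show ?thesis using False unfolding xi_def by simp
    next
      case True
      have "Pre1 G v u \<le> Pre_sel G v (xi u) (return_pmf b) u" if b: "b \<in> mv2 G u" for b
      proof -
        have "Pre_sel G w (xi u) (return_pmf b) u - Pre_sel G v (xi u) (return_pmf b) u \<le> c"
          unfolding Pre_sel_diff using dc wsum_le[of "\<lambda>u. w u - v u"] by (simp add: d_def)
        moreover have "Pre1_fix G w (xi u) u \<le> Pre_sel G w (xi u) (return_pmf b) u"
          using Pre1_fix_le[of G u b w "xi u"] ne2 b by blast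
        moreover have "w u - v u = c" using True by (simp add: Z_def d_def)
        ultimately show ?thesis using xiw[OF True] ZI[OF True] by linarith
      qed
      then have "Pre1 G v u \<le> Pre1_fix G v (xi u) u"
        using Pre1_fix_ge[of G u] ne2 by blast
      moreover have "Pre1_fix G v (xi u) u \<le> Pre1 G v u"
        using Pre1_upper[of G u v "xi u"] ne2 v0 v1 xiZ[OF True] by blast
      ultimately show ?thesis using xiZ[OF True] by (simp add: OptSel_def)
    qed
    define A where "A u = set_pmf (xi u)" for u
    define B where "B u = CountOpt G v u (xi u)" for u
    have osc: "(A u, B u) \<in> OptSelCount G v u" for u
    proof -
      have h1: "A u \<subseteq> mv1 G u" using xiopt[of u] by (simp add: A_def OptSel_def sel_at_def)
      have h2: "B u \<subseteq> mv2 G u" unfolding B_def CountOpt_def by blast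
      show ?thesis unfolding OptSelCount_def mem_Collect_eq case_prod_conv
        using h1 h2 xiopt[of u] unfolding A_def B_def by blast
    qed
    have clos: "x \<in> Z" if u: "u \<in> Z" and b: "b \<in> B u" and x: "x \<in> (\<Union>a\<in>A u. Dest G u a b)" for u b x
    proof -
      define q where "q = bind_pmf (xi u) (\<lambda>a. trans G u a b)"
      have xq: "x \<in> set_pmf q" using x by (auto simp: q_def A_def Dest_def)
      have b2: "b \<in> mv2 G u" and eqb: "Pre_sel G v (xi u) (return_pmf b) u = Pre1 G v u"
        using b by (auto simp: B_def CountOpt_def)
      have "Pre1_fix G w (xi u) u \<le> Pre_sel G w (xi u) (return_pmf b) u"
        using Pre1_fix_le[of G u b w "xi u"] ne2 b2 by blast
      moreover have "(\<Sum>t\<in>UNIV. d t * pmf q t) = Pre_sel G w (xi u) (return_pmf b) u - Pre_sel G v (xi u) (return_pmf b) u"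
        unfolding Pre_sel_diff q_def d_def ..
      moreover have "w u - v u = c" using u by (simp add: Z_def d_def)
      ultimately have "c \<le> (\<Sum>t\<in>UNIV. d t * pmf q t)"
        using xiw[OF u] ZI[OF u] eqb by linarith
      then have "d x = c" by (rule wsum_eq[OF dc _ xq])
      then show ?thesis by (simp add: Z_def)
    qed
    define sg where "sg q = (case q of TB1 u \<Rightarrow> TB2 u (A u) (B u) | _ \<Rightarrow> q)" for q :: "('s, 'm) tbst"
    define p1 where "p1 h = return_pmf (sg (last h))" for h :: "('s, 'm) tbst list"
    have sp1: "tb_strat1 G v p1"
      unfolding tb_strat1_def
    proof (intro allI impI)
      fix h :: "('s, 'm) tbst list" assume "h \<noteq> []" "last h \<in> tb_states G v" "is_p1 (last h)"
      then obtain u where u: "last h = TB1 u" by (auto simp: is_p1_def)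
      have "p1 h = return_pmf (TB2 u (A u) (B u))" by (simp add: p1_def sg_def u)
      moreover have "TB2 u (A u) (B u) \<in> tb_succ G v (last h)"
        unfolding u tb_succ.simps using osc[of u] by blast
      ultimately show "set_pmf (p1 h) \<subseteq> tb_succ G v (last h)" by simp
    qed
    define Q where "Q = TB1 ` Z \<union> (\<lambda>u. TB2 u (A u) (B u)) ` Z \<union> {TBR u (A u) b | u b. u \<in> Z \<and> b \<in> B u}"
    have win: "prob_safe (tb_safe F) (tb_kernel G v p1 p2) (TB1 s0) = 1" if p2: "tb_strat2 G v p2" for p2
    proof (rule ps_one[where S=Q])
      show "TB1 s0 \<in> Q" using s0Z by (simp add: Q_def)
      fix x assume "x \<in> Q"
      then show "tb_safe F x" using ZF by (auto simp: Q_def tb_safe_def)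
    next
      fix h :: "('s, 'm) tbst list" assume h: "h \<noteq> []" "last h \<in> Q"
      show "set_pmf (tb_kernel G v p1 p2 h) \<subseteq> Q"
      proof -
        consider (a) u where "u \<in> Z" "last h = TB1 u"
          | (b) u where "u \<in> Z" "last h = TB2 u (A u) (B u)"
          | (c) u b where "u \<in> Z" "b \<in> B u" "last h = TBR u (A u) b"
          using h(2) unfolding Q_def by blast
        then show ?thesis
        proof cases
          case a
          have "tb_kernel G v p1 p2 h = return_pmf (TB2 u (A u) (B u))"
            by (simp add: tb_kernel_def p1_def sg_def a)
          moreover have "TB2 u (A u) (B u) \<in> Q" using a(1) unfolding Q_def by blast
          ultimately show ?thesis by simp
        next
          case b
          have "last h \<in> tb_states G v" unfolding tb_states_def using b osc[of u] by blast
          moreover have "is_p2 (last h)" using b by (simp add: is_p2_def)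
          ultimately have "set_pmf (p2 h) \<subseteq> tb_succ G v (last h)"
            using p2 h(1) by (simp add: tb_strat2_def)
          moreover have "tb_succ G v (last h) \<subseteq> Q"
          proof
            fix y assume "y \<in> tb_succ G v (last h)"
            then obtain b' where "y = TBR u (A u) b'" "b' \<in> B u" unfolding b(2) tb_succ.simps by blast
            then show "y \<in> Q" using b(1) unfolding Q_def by blast
          qed
          moreover have "tb_kernel G v p1 p2 h = p2 h" by (simp add: tb_kernel_def b(2))
          ultimately show ?thesis by simp
        next
          case c
          let ?X = "TB1 ` (\<Union>a\<in>A u. Dest G u a b) :: ('s, 'm) tbst set"
          have fin: "finite ?X" by simp
          have "A u \<noteq> {}" by (simp add: A_def set_pmf_not_empty)
          moreover have "\<And>a. Dest G u a b \<noteq> {}" by (simp add: Dest_def set_pmf_not_empty)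
          ultimately have nem: "?X \<noteq> {}" by auto
          have "set_pmf (pmf_of_set ?X) = ?X" using fin nem by simp
          moreover have "?X \<subseteq> Q"
          proof
            fix y assume "y \<in> ?X"
            then obtain x where y: "y = TB1 x" and x: "x \<in> (\<Union>a\<in>A u. Dest G u a b)" by blast
            have "x \<in> Z" by (rule clos[OF c(1) c(2) x])
            then show "y \<in> Q" unfolding y Q_def by blast
          qed
          moreover have "tb_kernel G v p1 p2 h = pmf_of_set ?X" by (simp add: tb_kernel_def c(3))
          ultimately show ?thesis by simp
        qed
      qed
    qed
    have "TB1 s0 \<in> tb_states G v" by (simp add: tb_states_def)
    then have "TB1 s0 \<in> tb_as_win G v F"
      unfolding tb_as_win_def using sp1 win by blast
    then have "s0 \<in> Uset G F \<gamma>" using ZW[OF s0Z] by (simp add: Uset_def v_def)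
    then show False using Uemp by simp
  qed
  have "vals G F \<gamma> = val1 G F"
  proof
    fix t show "vals G F \<gamma> t = val1 G F t" using key[of t] vw[of t] by (simp add: d_def v_def w_def)
  qed
  then show ?thesis using st by (simp add: optimal1_def)
qed

end
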